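(* Let $\alpha\in\alpha_0\mathbb{Z}$ with $\frac{1}{\sqrt2}\le|\alpha|\le1$, $d=\alpha^2/2$, and fix $s\in\mathbb{Z}$. Then the vectors $(Y_{\alpha,-n-d}\otimes Y_{\alpha,-n-d-s})(\Omega_0\otimes\Omega_0)$, $n\in\mathbb{Z}$, are mutually orthogonal and the series $\sum_{n\in\mathbb{Z}}(Y_{\alpha,-n-d}\otimes Y_{\alpha,-n-d-s})(\Omega_0\otimes\Omega_0)$ does not converge in $\hat{\mathcal H}\otimes\hat{\mathcal H}$ (the sum of the squared norms of its terms is infinite). Consequently no operator of the form $\sum_n Y_{\alpha,-n-d}\otimes Y_{\alpha,-n-d-s}$ can be defined by this series on a domain containing $\Omega_0\otimes\Omega_0$.
   Context: For $\beta\in\mathbb{R}$ let $\mathcal H_\beta$ be the Hilbert space carrying a unitary representation of the Heisenberg algebra: operators $J_{\beta,n}$, $n\in\mathbb{Z}$, with $[J_{\beta,m},J_{\beta,n}]=m\,\delta_{m+n,0}$, $J_{\beta,n}^*=J_{\beta,-n}$, $J_{\beta,0}=\beta\cdot\mathbf 1$, and a cyclic unit vector $\Omega_\beta$ with $J_{\beta,n}\Omega_\beta=0$ for $n>0$; $\mathcal H_\beta$ is the closure of the span $\mathcal H_\beta^{\rm fin}$ of the vectors $J_{\beta,-n_1}\cdots J_{\beta,-n_k}\Omega_\beta$, $n_i>0$. Fix $\alpha_0\in\mathbb{R}$ with $0<|\alpha_0|\le1$ and set $\hat{\mathcal H}=\bigoplus_{j\in\mathbb{Z}}\mathcal H_{j\alpha_0}$,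 $\hat J_n=\bigoplus_j J_{j\alpha_0,n}$. For $\alpha\in\alpha_0\mathbb{Z}$ let $c_\alpha$ be the unitary on $\hat{\mathcal H}$ mapping $\mathcal H_\beta\to\mathcal H_{\beta+\alpha}$ by $c_\alpha \hat J_{-n_1}\cdots\hat J_{-n_k}\Omega_\beta=\hat J_{-n_1}\cdots\hat J_{-n_k}\Omega_{\beta+\alpha}$ ($n_i>0$). Define the formal series $E^{\pm}(\alpha,z)=\exp\bigl(\mp\sum_{n>0}\frac{\alpha\hat J_{\pm n}}{n}z^{\mp n}\bigr)$ and $Y_\alpha(z)=c_\alpha E^-(\alpha,z)E^+(\alpha,z)z^{\alpha\hat J_0}$, where $z^{\alpha\hat J_0}$ acts as $z^{\alpha\beta}$ on $\mathcal H_\beta$. With $d=\alpha^2/2$ write $Y_\alpha(z)=\sum_{s\in\mathbb{R}}Y_{\alpha,s}z^{-s-d}$; the coefficient $Y_{\alpha,s}$ maps $\mathcal H_\beta$ into $\mathcal H_{\beta+\alpha}$ and is nonzero on $\mathcal H_\beta$ only for $s\in\mathbb{Z}-\alpha\beta-d$. For $|\alpha|\le1$ these are bounded operators, and one has $\|Y_{\alpha,-n-d}\Omega_0\|^2=\binom{2d+n-1}{n}=\frac{\Gamma(2d+n)}{\Gamma(n+1)\Gamma(2d)}$ for integers $n\ge0$ (and $Y_{\alpha,-n-d}\Omega_0=0$ for $n<0$). *)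

theory Defs
  imports "HOL-Analysis.Analysis" "HOL-Library.Poly_Mapping"
begin

text \<open>Concrete (Fock / polynomial) model of hat-H^fin = direct sum over j of H_{j alpha0}^fin.
  A basis vector is a pair (j, m): j the sector (beta = j*alpha0), m a monomial,
  m i = multiplicity of the creation operator J_{-(i+1)}.\<close>

type_synonym mono = "nat \<Rightarrow>\<^sub>0 nat"
type_synonym vec = "int \<times> mono \<Rightarrow> complex"

definition fin_vec :: "vec \<Rightarrow> bool" where
  "fin_vec f \<longleftrightarrow> finite {b. f b \<noteq> 0}"

text \<open>squared norm of the basis vector J_{-1}^{m 0} J_{-2}^{m 1} ... Omega\<close>
definition weight :: "mono \<Rightarrow> real" where
  "weight m = (\<Prod>i\<in>Poly_Mapping.keys m. real (Suc i) ^ Poly_Mapping.lookup m i * fact (Poly_Mapping.lookup m i))"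

definition inner_vec :: "vec \<Rightarrow> vec \<Rightarrow> complex" where
  "inner_vec f g = (\<Sum>b | f b \<noteq> 0 \<and> g b \<noteq> 0. cnj (f b) * g b * complex_of_real (weight (snd b)))"

definition scal :: "complex \<Rightarrow> vec \<Rightarrow> vec" where
  "scal c f = (\<lambda>b. c * f b)"

text \<open>Heisenberg operators hat J_n: J_{-n} creation (multiplication by x_n),
  J_n = n d/dx_n for n>0, J_0 = beta on sector beta = j*alpha0.\<close>
definition J :: "real \<Rightarrow> int \<Rightarrow> vec \<Rightarrow> vec" where
  "J \<alpha>0 n f = (\<lambda>(j, m).
     if n < 0 then
       (if 0 < Poly_Mapping.lookup m (nat (- n) - 1)
        then f (j, m - Poly_Mapping.single (nat (- n) - 1) 1) else 0)
     else if 0 < n then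
       of_int n * of_nat (Suc (Poly_Mapping.lookup m (nat n - 1))) * f (j, m + Poly_Mapping.single (nat n - 1) 1)
     else complex_of_real (of_int j * \<alpha>0) * f (j, m))"

definition vac :: "int \<Rightarrow> vec" where
  "vac j = (\<lambda>b. if b = (j, 0) then 1 else 0)"

text \<open>c_alpha for alpha = a*alpha0: maps H_beta to H_{beta+alpha}, monomials unchanged\<close>
definition cop :: "real \<Rightarrow> real \<Rightarrow> vec \<Rightarrow> vec" where
  "cop \<alpha>0 \<alpha> f = (\<lambda>(j, m). f (j - (THE a::int. \<alpha> = of_int a * \<alpha>0), m))"

definition compositions :: "nat \<Rightarrow> nat list set" where
  "compositions k = {ks. (\<forall>x\<in>set ks. 0 < x) \<and> sum_list ks = k}"

text \<open>coefficient of z^k in E^-(alpha,z) = exp(X), X = sum_{n>0} (alpha/n) J_{-n} z^n: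
  sum over r of (1/r!) * [z^k] X^r\<close>
definition Em :: "real \<Rightarrow> real \<Rightarrow> nat \<Rightarrow> vec \<Rightarrow> vec" where
  "Em \<alpha>0 \<alpha> k f = (\<lambda>b. \<Sum>ks\<in>compositions k.
      complex_of_real (1 / fact (length ks)) *
      foldr (\<lambda>n g. scal (complex_of_real (\<alpha> / real n)) (J \<alpha>0 (- int n) g)) ks f b)"

text \<open>coefficient of z^{-l} in E^+(alpha,z) = exp(-sum_{n>0} (alpha/n) J_n z^{-n})\<close>
definition Ep :: "real \<Rightarrow> real \<Rightarrow> nat \<Rightarrow> vec \<Rightarrow> vec" where
  "Ep \<alpha>0 \<alpha> l f = (\<lambda>b. \<Sum>ks\<in>compositions l.
      complex_of_real (1 / fact (length ks)) *
      foldr (\<lambda>n g. scal (complex_of_real (- \<alpha> / real n)) (J \<alpha>0 (int n) g)) ks f b)"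

text \<open>Y_{alpha,s}: coefficient of z^{-s-d} (d = alpha^2/2) in
  Y_alpha(z) = c_alpha E^-(alpha,z) E^+(alpha,z) z^{alpha J_0}; on sector beta = j*alpha0 the
  term E^-_k E^+_l contributes to z^{k - l + alpha*beta}.\<close>
definition Ycoef :: "real \<Rightarrow> real \<Rightarrow> real \<Rightarrow> vec \<Rightarrow> vec" where
  "Ycoef \<alpha>0 \<alpha> s f = cop \<alpha>0 \<alpha> (\<lambda>(j, m).
      \<Sum>\<^sub>\<infinity>p \<in> {p :: nat \<times> nat. real (fst p) - real (snd p) + \<alpha> * (of_int j * \<alpha>0) = - s - \<alpha>\<^sup>2 / 2}.
        Em \<alpha>0 \<alpha> (fst p) (Ep \<alpha>0 \<alpha> (snd p) f) (j, m))"

type_synonym tvec = "(int \<times> mono) \<times> (int \<times> mono) \<Rightarrow> complex"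

definition tensor :: "vec \<Rightarrow> vec \<Rightarrow> tvec" where
  "tensor f g = (\<lambda>(b1, b2). f b1 * g b2)"

definition inner_tens :: "tvec \<Rightarrow> tvec \<Rightarrow> complex" where
  "inner_tens F G = (\<Sum>b | F b \<noteq> 0 \<and> G b \<noteq> 0.
      cnj (F b) * G b * complex_of_real (weight (snd (fst b)) * weight (snd (snd b))))"

definition tnorm :: "tvec \<Rightarrow> real" where
  "tnorm F = sqrt (Re (inner_tens F F))"

definition psum :: "(int \<Rightarrow> tvec) \<Rightarrow> nat \<Rightarrow> tvec" where
  "psum v N = (\<lambda>x. \<Sum>n\<in>{- int N..int N}. v n x)"

end

theory Submission
  imports Defs "HOL-Combinatorics.Multiset_Permutations"
begin


lemma J_zero: "J a0 n (\<lambda>_. 0) = (\<lambda>_. 0)"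
  by (auto simp: J_def fun_eq_iff split: prod.splits)

lemma scal_zero: "scal c (\<lambda>_. 0) = (\<lambda>_. 0)"
  by (simp add: scal_def)

lemma compositions_0: "compositions 0 = {[]}"
  by (auto simp: compositions_def) (metis neq_Nil_conv list.set_intros(1) less_irrefl)

lemma compositions_finite: "finite (compositions k)"
proof -
  have "compositions k \<subseteq> {xs. set xs \<subseteq> {0..k} \<and> length xs \<le> k}"
  proof
    fix xs assume "xs \<in> compositions k"
    hence p: "\<forall>x\<in>set xs. 0 < x" and s: "sum_list xs = k" by (auto simp: compositions_def)
    have "set xs \<subseteq> {0..k}" using s member_le_sum_list by fastforce
    moreover have "length xs \<le> sum_list xs" using p
      by (induction xs) (auto simp: Suc_le_eq)
    ultimately show "xs \<in> {xs. set xs \<subseteq> {0..k} \<and> length xs \<le> k}" using s by auto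
  qed
  thus ?thesis by (rule finite_subset) (rule finite_lists_length_le, simp)
qed

lemma foldr_Fp_zero:
  "foldr (\<lambda>n g. scal (c n) (J a0 (int n) g)) ks (\<lambda>_. 0) = (\<lambda>_. 0)"
  by (induction ks) (auto simp: J_zero scal_zero)

lemma foldr_Fm_zero:
  "foldr (\<lambda>n g. scal (c n) (J a0 (- int n) g)) ks (\<lambda>_. 0) = (\<lambda>_. 0)"
  by (induction ks) (auto simp: J_zero scal_zero)

lemma single_plus_ne0: "(m::nat \<Rightarrow>\<^sub>0 nat) + Poly_Mapping.single i (Suc j) \<noteq> 0"
proof
  assume "m + Poly_Mapping.single i (Suc j) = 0"
  hence "Poly_Mapping.lookup (m + Poly_Mapping.single i (Suc j)) i = Poly_Mapping.lookup 0 i" by (rule arg_cong)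
  thus False by (simp add: lookup_add)
qed

lemma J_pos_vac: "0 < k \<Longrightarrow> J a0 (int k) (vac 0) = (\<lambda>_. 0)"
  by (auto simp: J_def vac_def fun_eq_iff single_plus_ne0 split: prod.splits)

lemma foldr_Fp_vac:
  assumes "ks \<noteq> []" "\<forall>k\<in>set ks. 0 < k"
  shows "foldr (\<lambda>n g. scal (c n) (J a0 (int n) g)) ks (vac 0) = (\<lambda>_. 0)"
  using assms
proof (induction ks)
  case Nil then show ?case by simp
next
  case (Cons k ks)
  show ?case
  proof (cases "ks = []")
    case True then show ?thesis using Cons by (simp add: J_pos_vac scal_zero)
  next
    case False then show ?thesis using Cons by (simp add: J_zero scal_zero)
  qed
qed

lemma Ep_vac: "Ep a0 a l (vac 0) = (if l = 0 then vac 0 else (\<lambda>_. 0))"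
proof (cases "l = 0")
  case True then show ?thesis by (simp add: Ep_def compositions_0)
next
  case False
  have "\<And>ks. ks \<in> compositions l \<Longrightarrow> foldr (\<lambda>n g. scal (complex_of_real (- a / real n)) (J a0 (int n) g)) ks (vac 0) = (\<lambda>_. 0)"
    using False by (intro foldr_Fp_vac) (auto simp: compositions_def)
  then show ?thesis using False unfolding Ep_def by simp
qed

lemma Em_zero: "Em a0 a k (\<lambda>_. 0) = (\<lambda>_. 0)"
  unfolding Em_def by (subst foldr_Fm_zero) simp

definition mon :: "nat list \<Rightarrow> nat \<Rightarrow>\<^sub>0 nat" where
  "mon ks = sum_list (map (\<lambda>k. Poly_Mapping.single (k - 1) 1) ks)"

lemma minus_single_iff:
  "(0 < Poly_Mapping.lookup m i \<and> m - Poly_Mapping.single i 1 = p) \<longleftrightarrow> m = Poly_Mapping.single i (1::nat) + p"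
proof
  assume h: "0 < Poly_Mapping.lookup m i \<and> m - Poly_Mapping.single i 1 = p"
  show "m = Poly_Mapping.single i 1 + p"
  proof (rule poly_mapping_eqI)
    fix k
    show "Poly_Mapping.lookup m k = Poly_Mapping.lookup (Poly_Mapping.single i 1 + p) k"
      using h by (cases "k = i") (auto simp: lookup_add lookup_minus lookup_single simp flip: h[THEN conjunct2])
  qed
next
  assume h: "m = Poly_Mapping.single i 1 + p"
  have "m - Poly_Mapping.single i 1 = p"
    by (rule poly_mapping_eqI) (simp add: h lookup_add lookup_minus lookup_single)
  then show "0 < Poly_Mapping.lookup m i \<and> m - Poly_Mapping.single i 1 = p"
    by (simp add: h lookup_add)
qed

lemma foldr_Fm_vac:
  assumes "\<forall>k\<in>set ks. 0 < k"
  shows "foldr (\<lambda>n g. scal (c n) (J a0 (- int n) g)) ks (vac 0) =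
    (\<lambda>(j, m). if j = 0 \<and> m = mon ks then (\<Prod>k\<leftarrow>ks. c k) else 0)"
  using assms
proof (induction ks)
  case Nil then show ?case by (auto simp: vac_def mon_def fun_eq_iff)
next
  case (Cons k ks)
  have k: "0 < k" using Cons by simp
  have e: "\<And>m. (0 < Poly_Mapping.lookup m (k - 1) \<and> m - Poly_Mapping.single (k-1) 1 = mon ks) \<longleftrightarrow> m = mon (k # ks)"
    using minus_single_iff by (simp add: mon_def)
  let ?G = "\<lambda>(j, m). if j = 0 \<and> m = mon ks then (\<Prod>k\<leftarrow>ks. c k) else 0"
  have IH: "foldr (\<lambda>n g. scal (c n) (J a0 (- int n) g)) ks (vac 0) = ?G" using Cons by simp
  have "scal (c k) (J a0 (- int k) ?G) (j, m) =
      (if j = 0 \<and> m = mon (k # ks) then (\<Prod>k\<leftarrow>k # ks. c k) else 0)" for j m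
  proof -
    have "scal (c k) (J a0 (- int k) ?G) (j, m) = c k * (if 0 < Poly_Mapping.lookup m (k - 1)
        then ?G (j, m - Poly_Mapping.single (k - 1) 1) else 0)"
      using k by (simp add: J_def scal_def)
    also have "\<dots> = (if j = 0 \<and> m = mon (k # ks) then (\<Prod>k\<leftarrow>k # ks. c k) else 0)"
      using e[of m] by auto
    finally show ?thesis .
  qed
  then show ?case by (simp add: IH fun_eq_iff)
qed


definition E :: "real \<Rightarrow> nat \<Rightarrow> (nat \<Rightarrow>\<^sub>0 nat) \<Rightarrow> real" where
  "E a k m = (\<Sum>ks\<in>compositions k. if m = mon ks then (\<Prod>k\<leftarrow>ks. a / real k) / fact (length ks) else 0)"

lemma Em_vac: "Em a0 a k (vac 0) = (\<lambda>(j, m). if j = 0 then complex_of_real (E a k m) else 0)"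
proof -
  have f: "\<And>ks. ks \<in> compositions k \<Longrightarrow>
     foldr (\<lambda>n g. scal (complex_of_real (a / real n)) (J a0 (- int n) g)) ks (vac 0) =
    (\<lambda>(j, m). if j = 0 \<and> m = mon ks then (\<Prod>k\<leftarrow>ks. complex_of_real (a / real k)) else 0)"
    by (rule foldr_Fm_vac) (auto simp: compositions_def)
  have p: "(\<Prod>k\<leftarrow>ks. complex_of_real a / of_nat k) = complex_of_real (\<Prod>k\<leftarrow>ks. a / real k)" for ks
    by (induction ks) auto
  show ?thesis
    unfolding Em_def
    apply (simp only: f cong: sum.cong)
    unfolding E_def
    by (auto simp: fun_eq_iff p of_real_sum intro!: sum.cong split: prod.splits)
qed

lemma infsum_delta: "infsum (\<lambda>p. if p = q then X else 0) P = (if q \<in> P then X else (0::complex))"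
proof -
  have "infsum (\<lambda>p. if p = q then X else 0) P = infsum (\<lambda>p. if p = q then X else 0) (P \<inter> {q})"
    by (rule infsum_cong_neutral) auto
  also have "\<dots> = (if q \<in> P then X else 0)"
    by (cases "q \<in> P") auto
  finally show ?thesis .
qed

lemma Ycoef_vac:
  fixes n :: int and A :: int
  assumes a0: "a0 \<noteq> 0" and aA: "a = of_int A * a0" and t: "- t - a\<^sup>2 / 2 = of_int n"
  shows "Ycoef a0 a t (vac 0) = (\<lambda>(j, m). if 0 \<le> n \<and> j = A then complex_of_real (E a (nat n) m) else 0)"
proof -
  have THE: "(THE b::int. a = of_int b * a0) = A"
    using a0 aA by (intro the_equality) auto
  have inner: "(\<Sum>\<^sub>\<infinity>p \<in> {p :: nat \<times> nat. real (fst p) - real (snd p) + a * (of_int j * a0) = - t - a\<^sup>2 / 2}.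
        Em a0 a (fst p) (Ep a0 a (snd p) (vac 0)) (j, m)) =
      (if 0 \<le> n \<and> j = 0 then complex_of_real (E a (nat n) m) else 0)" for j m
  proof -
    let ?P = "{p :: nat \<times> nat. real (fst p) - real (snd p) + a * (of_int j * a0) = - t - a\<^sup>2 / 2}"
    let ?X = "if 0 \<le> n \<and> j = 0 then complex_of_real (E a (nat n) m) else 0"
    have "(\<Sum>\<^sub>\<infinity>p \<in> ?P. Em a0 a (fst p) (Ep a0 a (snd p) (vac 0)) (j, m)) =
          (\<Sum>\<^sub>\<infinity>p \<in> ?P. if p = (nat n, 0) then ?X else 0)"
    proof (rule infsum_cong)
      fix p assume "p \<in> ?P"
      then have pP: "real (fst p) - real (snd p) + a * (of_int j * a0) = of_int n" using t by simp
      obtain x y where p: "p = (x, y)" by force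
      show "Em a0 a (fst p) (Ep a0 a (snd p) (vac 0)) (j, m) = (if p = (nat n, 0) then ?X else 0)"
      proof (cases "y = 0 \<and> j = 0")
        case True
        then have "real x = of_int n" using pP p by simp
        then have "n \<ge> 0" "x = nat n" by linarith+
        then show ?thesis using True p by (simp add: Ep_vac Em_vac)
      next
        case False
        then show ?thesis using p by (auto simp: Ep_vac Em_vac Em_zero)
      qed
    qed
    also have "\<dots> = ?X"
      using t by (subst infsum_delta) auto
    finally show ?thesis .
  qed
  show ?thesis
    unfolding Ycoef_def cop_def THE
    by (auto simp: fun_eq_iff inner split: prod.splits)
qed



definition monM :: "nat multiset \<Rightarrow> nat \<Rightarrow>\<^sub>0 nat" where
  "monM M = sum_mset (image_mset (\<lambda>k. Poly_Mapping.single (k - 1) 1) M)"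

lemma mon_monM: "mon ks = monM (mset ks)"
  by (induction ks) (auto simp: mon_def monM_def)

lemma lookup_monM: "\<forall>x\<in>#M. 0 < x \<Longrightarrow> Poly_Mapping.lookup (monM M) i = count M (Suc i)"
  by (induction M) (auto simp: monM_def lookup_add lookup_single)

lemma monM_inj: "\<forall>x\<in>#M. 0 < x \<Longrightarrow> \<forall>x\<in>#M'. 0 < x \<Longrightarrow> monM M = monM M' \<Longrightarrow> M = M'"
proof (rule multiset_eqI)
  fix x assume p: "\<forall>x\<in>#M. 0 < x" "\<forall>x\<in>#M'. 0 < x" and e: "monM M = monM M'"
  show "count M x = count M' x"
  proof (cases x)
    case 0 then show ?thesis using p by (metis count_eq_zero_iff less_irrefl)
  next
    case (Suc i)
    then show ?thesis using lookup_monM[OF p(1), of i] lookup_monM[OF p(2), of i] e by simp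
  qed
qed

definition T :: "nat \<Rightarrow> nat multiset set" where
  "T k = mset ` compositions k"

lemma T_iff: "M \<in> T k \<longleftrightarrow> (\<forall>x\<in>#M. 0 < x) \<and> sum_mset M = k"
proof
  assume "M \<in> T k"
  then obtain ks where "ks \<in> compositions k" "M = mset ks" by (auto simp: T_def)
  then show "(\<forall>x\<in>#M. 0 < x) \<and> sum_mset M = k"
    by (auto simp: compositions_def sum_mset_sum_list)
next
  assume h: "(\<forall>x\<in>#M. 0 < x) \<and> sum_mset M = k"
  obtain ks where ks: "mset ks = M" using ex_mset by blast
  then have "ks \<in> compositions k" using h by (auto simp: compositions_def sum_mset_sum_list simp flip: ks)
  then show "M \<in> T k" using ks by (auto simp: T_def)
qed

lemma T_finite: "finite (T k)"
  by (simp add: T_def compositions_finite)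

lemma T_0: "T 0 = {{#}}"
proof -
  have "M = {#}" if "\<forall>x\<in>#M. 0 < x" "sum_mset M = 0" for M :: "nat multiset"
    using that by (cases M) auto
  then show ?thesis by (auto simp: T_iff)
qed

definition phi :: "real \<Rightarrow> nat \<Rightarrow> nat \<Rightarrow> real" where
  "phi a x c = (a\<^sup>2 / real x) ^ c / fact c"

definition g :: "real \<Rightarrow> nat multiset \<Rightarrow> real" where
  "g a M = (\<Prod>x\<in>set_mset M. phi a x (count M x))"

lemma g_S: "finite S \<Longrightarrow> set_mset M \<subseteq> S \<Longrightarrow> g a M = (\<Prod>x\<in>S. phi a x (count M x))"
  unfolding g_def by (rule prod.mono_neutral_left) (auto simp: phi_def not_in_iff)

lemma sum_mset_S: "finite S \<Longrightarrow> set_mset M \<subseteq> S \<Longrightarrow> (\<Sum>x\<in>S. count M x * x) = sum_mset M"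
proof (induction M)
  case empty then show ?case by simp
next
  case (add y M)
  have "(\<Sum>x\<in>S. count (add_mset y M) x * x) = (\<Sum>x\<in>S. count M x * x + (if x = y then y else 0))"
    by (rule sum.cong) auto
  also have "\<dots> = (\<Sum>x\<in>S. count M x * x) + y" using add.prems by (simp add: sum.distrib)
  finally show ?case using add by simp
qed

lemma g_remove:
  assumes "x \<in># M" "0 < x"
  shows "real x * real (count M x) * g a M = a\<^sup>2 * g a (M - {#x#})"
proof -
  let ?S = "set_mset M"
  have f: "finite ?S" by simp
  have s2: "set_mset (M - {#x#}) \<subseteq> ?S" by (meson in_diffD subsetI)
  have xS: "x \<in> ?S" using assms by simp
  have "g a M = phi a x (count M x) * (\<Prod>y\<in>?S - {x}. phi a y (count M y))"
    using g_S[OF f, of M a] prod.remove[OF f xS] by simp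
  moreover have "g a (M - {#x#}) = phi a x (count M x - 1) * (\<Prod>y\<in>?S - {x}. phi a y (count M y))"
  proof -
    have "g a (M - {#x#}) = (\<Prod>y\<in>?S. phi a y (count (M - {#x#}) y))" by (rule g_S[OF f s2])
    also have "\<dots> = phi a x (count (M - {#x#}) x) * (\<Prod>y\<in>?S - {x}. phi a y (count (M - {#x#}) y))"
      by (rule prod.remove[OF f xS])
    also have "(\<Prod>y\<in>?S - {x}. phi a y (count (M - {#x#}) y)) = (\<Prod>y\<in>?S - {x}. phi a y (count M y))"
      by (rule prod.cong) auto
    finally show ?thesis by simp
  qed
  moreover have "real x * real (count M x) * phi a x (count M x) = a\<^sup>2 * phi a x (count M x - 1)"
  proof -
    obtain c where c: "count M x = Suc c" using assms by (cases "count M x") (auto simp: not_in_iff[symmetric])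
    have "phi a x (Suc c) = phi a x c * (a\<^sup>2 / real x) / real (Suc c)"
      unfolding phi_def by (simp add: fact_Suc power_Suc field_simps del: of_nat_Suc)
    then show ?thesis using assms(2) unfolding c by (simp add: field_simps del: of_nat_Suc)
  qed
  ultimately show ?thesis by (metis mult.assoc)
qed

definition AA :: "real \<Rightarrow> nat \<Rightarrow> real" where
  "AA a k = (\<Sum>M\<in>T k. g a M)"

lemma AA_rec: "real k * AA a k = a\<^sup>2 * (\<Sum>x\<in>{1..k}. AA a (k - x))"
proof -
  have "real k * AA a k = (\<Sum>M\<in>T k. \<Sum>x\<in>set_mset M. real x * real (count M x) * g a M)"
  proof -
    have "real k * g a M = (\<Sum>x\<in>set_mset M. real x * real (count M x) * g a M)" if "M \<in> T k" for M
    proof -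
      have "k = (\<Sum>x\<in>set_mset M. count M x * x)" using that sum_mset_S[of "set_mset M" M] by (simp add: T_iff)
      then have "real k = (\<Sum>x\<in>set_mset M. real x * real (count M x))" by (simp add: mult.commute)
      then show ?thesis by (simp add: sum_distrib_right)
    qed
    then show ?thesis by (simp add: AA_def sum_distrib_left)
  qed
  also have "\<dots> = (\<Sum>M\<in>T k. \<Sum>x\<in>set_mset M. a\<^sup>2 * g a (M - {#x#}))"
    by (intro sum.cong refl g_remove) (auto simp: T_iff)
  also have "\<dots> = (\<Sum>(M, x)\<in>Sigma (T k) set_mset. a\<^sup>2 * g a (M - {#x#}))"
    by (rule sum.Sigma) (auto simp: T_finite)
  also have "\<dots> = (\<Sum>(x, M)\<in>Sigma {1..k} (\<lambda>x. T (k - x)). a\<^sup>2 * g a M)"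
  proof (rule sum.reindex_bij_witness[where i = "\<lambda>(x, M). (add_mset x M, x)" and j = "\<lambda>(M, x). (x, M - {#x#})"])
    fix p assume "p \<in> Sigma (T k) set_mset"
    then obtain M x where p: "p = (M, x)" "M \<in> T k" "x \<in># M" by auto
    have pos: "0 < x" using p(2,3) by (simp add: T_iff)
    have sm: "sum_mset M = k" using p(2) by (simp add: T_iff)
    have ins: "M = add_mset x (M - {#x#})" using p(3) by simp
    have sm2: "sum_mset M = x + sum_mset (M - {#x#})" by (subst ins) simp
    have xk: "x \<le> k" using sm sm2 by simp
    have pos2: "\<forall>y\<in>#M - {#x#}. 0 < y" using p(2) by (auto simp: T_iff dest: in_diffD)
    have "M - {#x#} \<in> T (k - x)" using pos2 sm sm2 by (simp add: T_iff)
    then show "(\<lambda>(M, x). (x, M - {#x#})) p \<in> Sigma {1..k} (\<lambda>x. T (k - x))"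
      using p(1) pos xk by simp
    show "(\<lambda>(x, M). (add_mset x M, x)) ((\<lambda>(M, x). (x, M - {#x#})) p) = p"
      using p(1) ins by simp
    show "(\<lambda>(x, M). a\<^sup>2 * g a M) ((\<lambda>(M, x). (x, M - {#x#})) p) = (\<lambda>(M, x). a\<^sup>2 * g a (M - {#x#})) p"
      using p(1) by simp
  next
    fix q assume "q \<in> Sigma {1..k} (\<lambda>x. T (k - x))"
    then obtain x M where q: "q = (x, M)" "1 \<le> x" "x \<le> k" "M \<in> T (k - x)" by auto
    then show "(\<lambda>(M, x). (x, M - {#x#})) ((\<lambda>(x, M). (add_mset x M, x)) q) = q" by simp
    have "\<forall>y\<in>#M. 0 < y" "sum_mset M = k - x" using q(4) by (simp_all add: T_iff)
    then have "add_mset x M \<in> T k" using q(2,3) by (simp add: T_iff)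
    then show "(\<lambda>(x, M). (add_mset x M, x)) q \<in> Sigma (T k) set_mset"
      using q(1) by simp
  qed
  also have "\<dots> = a\<^sup>2 * (\<Sum>x\<in>{1..k}. AA a (k - x))"
    by (subst sum.Sigma[symmetric]) (auto simp: T_finite AA_def sum_distrib_left)
  finally show ?thesis .
qed



definition h :: "real \<Rightarrow> nat multiset \<Rightarrow> real" where
  "h a M = (\<Prod>x\<in>set_mset M. (a / real x) ^ count M x / fact (count M x))"

lemma mon_eq_iff: "\<forall>x\<in>#M. 0 < x \<Longrightarrow> ks \<in> compositions k \<Longrightarrow> (monM M = mon ks) \<longleftrightarrow> mset ks = M"
  using monM_inj[of M "mset ks"] by (auto simp: mon_monM compositions_def)

lemma E_monM:
  assumes M: "M \<in> T k"
  shows "E a k (monM M) = h a M"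
proof -
  have pos: "\<forall>x\<in>#M. 0 < x" using M by (simp add: T_iff)
  let ?Q = "(\<Prod>x\<in>set_mset M. (a / real x) ^ count M x)"
  have set_eq: "{ks \<in> compositions k. mset ks = M} = permutations_of_multiset M"
    using M by (auto simp: permutations_of_multiset_def T_iff compositions_def sum_mset_sum_list)
  have "E a k (monM M) = (\<Sum>ks\<in>compositions k. if mset ks = M then (\<Prod>k\<leftarrow>ks. a / real k) / fact (length ks) else 0)"
    unfolding E_def by (rule sum.cong) (auto simp: mon_eq_iff[OF pos])
  also have "\<dots> = (\<Sum>ks\<in>{ks \<in> compositions k. mset ks = M}. (\<Prod>k\<leftarrow>ks. a / real k) / fact (length ks))"
    by (simp add: sum.inter_filter compositions_finite)
  also have "\<dots> = (\<Sum>ks\<in>permutations_of_multiset M. ?Q / fact (size M))"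
  proof (unfold set_eq, rule sum.cong[OF refl])
    fix ks assume "ks \<in> permutations_of_multiset M"
    then have e: "mset ks = M" by (simp add: permutations_of_multiset_def)
    have "(\<Prod>k\<leftarrow>ks. a / real k) = prod_mset (image_mset (\<lambda>k. a / real k) (mset ks))"
      by (metis mset_map prod_mset_prod_list)
    also have "\<dots> = ?Q" by (simp add: e image_prod_mset_multiplicity)
    finally show "(\<Prod>k\<leftarrow>ks. a / real k) / fact (length ks) = ?Q / fact (size M)"
      using e by (metis size_mset)
  qed
  also have "\<dots> = real (card (permutations_of_multiset M)) * ?Q / fact (size M)" by simp
  also have "\<dots> = ?Q / (\<Prod>x\<in>set_mset M. fact (count M x))"
  proof -
    have c: "real (card (permutations_of_multiset M)) * (\<Prod>x\<in>set_mset M. fact (count M x)) = fact (size M)"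
    proof -
      have "real (card (permutations_of_multiset M) * (\<Prod>x\<in>set_mset M. fact (count M x))) = real (fact (size M))"
        by (simp only: card_permutations_of_multiset_aux)
      then show ?thesis by (simp only: of_nat_mult of_nat_prod of_nat_fact)
    qed
    have nz: "(\<Prod>x\<in>set_mset M. fact (count M x) :: real) \<noteq> 0" by simp
    have "fact (size M) \<noteq> (0::real)" by simp
    then have cd: "real (card (permutations_of_multiset M)) = fact (size M) / (\<Prod>x\<in>set_mset M. fact (count M x))"
      using c nz by (simp add: eq_divide_eq)
    show ?thesis unfolding cd using \<open>fact (size M) \<noteq> (0::real)\<close> by simp
  qed
  also have "\<dots> = h a M" by (simp add: h_def prod_dividef)
  finally show ?thesis .
qed

lemma E_zero: "m \<notin> monM ` T k \<Longrightarrow> E a k m = 0"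
  unfolding E_def by (rule sum.neutral) (auto simp: T_def mon_monM)

lemma weight_monM:
  assumes pos: "\<forall>x\<in>#M. 0 < x"
  shows "weight (monM M) = (\<Prod>x\<in>set_mset M. real x ^ count M x * fact (count M x))"
proof -
  have keys: "Poly_Mapping.keys (monM M) = (\<lambda>x. x - 1) ` set_mset M"
  proof -
    have k: "i \<in> Poly_Mapping.keys (monM M) \<longleftrightarrow> Suc i \<in># M" for i
      by (simp add: in_keys_iff lookup_monM[OF pos] not_in_iff)
    show ?thesis
    proof (rule set_eqI)
      fix i show "i \<in> Poly_Mapping.keys (monM M) \<longleftrightarrow> i \<in> (\<lambda>x. x - 1) ` set_mset M"
        unfolding k
      proof
        assume "Suc i \<in># M" then show "i \<in> (\<lambda>x. x - 1) ` set_mset M"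
          by (metis diff_Suc_1 image_eqI)
      next
        assume "i \<in> (\<lambda>x. x - 1) ` set_mset M"
        then obtain x where "x \<in># M" "i = x - 1" by auto
        then show "Suc i \<in># M" using pos by auto
      qed
    qed
  qed
  have inj: "inj_on (\<lambda>x. x - 1) (set_mset M)"
    using pos by (auto simp: inj_on_def) (metis Suc_pred)
  show ?thesis
    unfolding weight_def keys prod.reindex[OF inj]
    by (rule prod.cong) (use pos in \<open>auto simp: lookup_monM\<close>)
qed

lemma hw_g:
  assumes pos: "\<forall>x\<in>#M. 0 < x"
  shows "(h a M)\<^sup>2 * weight (monM M) = g a M"
proof -
  have "(h a M)\<^sup>2 * weight (monM M) =
      (\<Prod>x\<in>set_mset M. ((a / real x) ^ count M x / fact (count M x))\<^sup>2 * (real x ^ count M x * fact (count M x)))"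
    by (simp add: h_def weight_monM[OF pos] prod_power_distrib prod.distrib)
  also have "\<dots> = g a M"
    unfolding g_def phi_def
  proof (rule prod.cong[OF refl])
    fix x assume "x \<in># M"
    then have x: "0 < x" using pos by auto
    show "((a / real x) ^ count M x / fact (count M x))\<^sup>2 * (real x ^ count M x * fact (count M x)) =
          (a\<^sup>2 / real x) ^ count M x / fact (count M x)"
      using x by (simp add: power_divide power2_eq_square power_mult_distrib field_simps)
  qed
  finally show ?thesis .
qed



lemma g_nonneg: "0 \<le> g a M"
  unfolding g_def phi_def by (intro prod_nonneg) simp

lemma AA_nonneg: "0 \<le> AA a k"
  unfolding AA_def by (intro sum_nonneg g_nonneg)

lemma sum_rev_aux: "(\<Sum>x\<in>{1..k}. f (k - x)) = (\<Sum>i<k. f i :: real)" for k :: nat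
  by (rule sum.reindex_bij_witness[of _ "\<lambda>i. k - i" "\<lambda>x. k - x"]) auto

lemma AA_step: "real (Suc k) * AA a (Suc k) = (real k + a\<^sup>2) * AA a k"
proof -
  have "real (Suc k) * AA a (Suc k) = a\<^sup>2 * (\<Sum>i<Suc k. AA a i)"
    using AA_rec[of "Suc k" a] by (simp only: sum_rev_aux)
  also have "\<dots> = a\<^sup>2 * AA a k + a\<^sup>2 * (\<Sum>i<k. AA a i)" by (simp add: algebra_simps)
  also have "a\<^sup>2 * (\<Sum>i<k. AA a i) = real k * AA a k"
    using AA_rec[of k a] by (simp only: sum_rev_aux)
  finally show ?thesis by (simp add: algebra_simps)
qed

lemma AA_0: "AA a 0 = 1"
  by (simp add: AA_def T_0 g_def)

lemma AA_lower:
  assumes a: "1/2 \<le> a\<^sup>2" and k: "1 \<le> k"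
  shows "1 \<le> 4 * real k * (AA a k)\<^sup>2"
  using k
proof (induction k rule: dec_induct)
  case base
  have "AA a 1 = a\<^sup>2" using AA_step[of 0 a] by (simp add: AA_0)
  moreover have "(1/2)\<^sup>2 \<le> (a\<^sup>2)\<^sup>2" by (rule power_mono) (use a in simp_all)
  ultimately show ?case by (simp add: power2_eq_square)
next
  case (step k)
  let ?A = "AA a k" and ?B = "AA a (Suc k)"
  have A0: "0 \<le> ?A" by (rule AA_nonneg)
  have "real (Suc k) * ?B \<ge> (real k + 1/2) * ?A"
    using AA_step[of k a] A0 a by (simp add: mult_right_mono)
  moreover have "0 \<le> (real k + 1/2) * ?A" using A0 by simp
  ultimately have "(real (Suc k) * ?B)\<^sup>2 \<ge> ((real k + 1/2) * ?A)\<^sup>2"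
    by (rule power_mono)
  moreover have "((real k + 1/2) * ?A)\<^sup>2 \<ge> real k * real (Suc k) * ?A\<^sup>2"
  proof -
    have "(real k + 1/2)\<^sup>2 \<ge> real k * real (Suc k)" by (simp add: power2_eq_square algebra_simps)
    then show ?thesis by (simp add: power_mult_distrib mult_right_mono)
  qed
  ultimately have "4 * (real (Suc k) * ?B)\<^sup>2 \<ge> real (Suc k) * (4 * real k * ?A\<^sup>2)" by (simp add: algebra_simps)
  moreover have "real (Suc k) * (4 * real k * ?A\<^sup>2) \<ge> real (Suc k) * 1"
    using step.IH by (intro mult_left_mono) auto
  ultimately have "real (Suc k) * 1 \<le> 4 * (real (Suc k) * ?B)\<^sup>2" by linarith
  also have "4 * (real (Suc k) * ?B)\<^sup>2 = real (Suc k) * (4 * real (Suc k) * ?B\<^sup>2)"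
    by (simp add: power2_eq_square algebra_simps)
  finally show ?case by (rule mult_left_le_imp_le) simp
qed



definition YY :: "real \<Rightarrow> int \<Rightarrow> int \<Rightarrow> vec" where
  "YY a A k = (\<lambda>(j, m). if 0 \<le> k \<and> j = A then complex_of_real (E a (nat k) m) else 0)"

definition V :: "real \<Rightarrow> int \<Rightarrow> int \<Rightarrow> int \<Rightarrow> tvec" where
  "V a A s n = tensor (YY a A n) (YY a A (n + s))"

definition U :: "int \<Rightarrow> int \<Rightarrow> int \<Rightarrow> ((int \<times> mono) \<times> (int \<times> mono)) set" where
  "U A s n = (if 0 \<le> n \<and> 0 \<le> n + s then
     (\<lambda>(M1, M2). ((A, monM M1), (A, monM M2))) ` (T (nat n) \<times> T (nat (n + s))) else {})"

definition tt :: "real \<Rightarrow> int \<Rightarrow> int \<Rightarrow> real" where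
  "tt a s n = (if 0 \<le> n \<and> 0 \<le> n + s then AA a (nat n) * AA a (nat (n + s)) else 0)"

lemma U_finite: "finite (U A s n)"
  by (simp add: U_def T_finite)

lemma YY_supp: "YY a A k (j, m) \<noteq> 0 \<Longrightarrow> 0 \<le> k \<and> j = A \<and> m \<in> monM ` T (nat k)"
  unfolding YY_def using E_zero by (auto split: if_splits)

lemma V_supp: "V a A s n b \<noteq> 0 \<Longrightarrow> b \<in> U A s n"
proof -
  obtain j1 m1 j2 m2 where b: "b = ((j1, m1), (j2, m2))" by (cases b) auto
  assume "V a A s n b \<noteq> 0"
  then have "YY a A n (j1, m1) \<noteq> 0" "YY a A (n + s) (j2, m2) \<noteq> 0"
    by (auto simp: V_def tensor_def b)
  from YY_supp[OF this(1)] YY_supp[OF this(2)] show "b \<in> U A s n"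
    unfolding U_def b by auto
qed

lemma U_disj:
  assumes "n \<noteq> n'" shows "U A s n \<inter> U A s n' = {}"
proof (rule ccontr)
  assume "U A s n \<inter> U A s n' \<noteq> {}"
  then obtain M1 M2 M1' M2' where h: "M1 \<in> T (nat n)" "M1' \<in> T (nat n')" "monM M1 = monM M1'"
    "0 \<le> n" "0 \<le> n'"
    by (auto simp: U_def split: if_splits)
  then have "M1 = M1'" by (intro monM_inj) (auto simp: T_iff)
  then have "nat n = nat n'" using h by (auto simp: T_iff)
  then show False using h assms by simp
qed

lemma inner_tens_gen:
  assumes "finite S" "\<And>b. F b \<noteq> 0 \<Longrightarrow> b \<in> S"
  shows "inner_tens F F = (\<Sum>b\<in>S. cnj (F b) * F b * complex_of_real (weight (snd (fst b)) * weight (snd (snd b))))"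
  unfolding inner_tens_def
  by (rule sum.mono_neutral_left) (use assms in auto)

lemma U_sum: "(\<Sum>b\<in>U A s n. cnj (V a A s n b) * V a A s n b *
    complex_of_real (weight (snd (fst b)) * weight (snd (snd b)))) = complex_of_real (tt a s n)"
proof (cases "0 \<le> n \<and> 0 \<le> n + s")
  case False then show ?thesis by (auto simp: U_def tt_def)
next
  case True
  let ?f = "\<lambda>(M1, M2). ((A, monM M1), (A, monM M2))"
  have inj: "inj_on ?f (T (nat n) \<times> T (nat (n + s)))"
    by (auto simp: inj_on_def T_iff intro: monM_inj)
  have "(\<Sum>b\<in>U A s n. cnj (V a A s n b) * V a A s n b *
    complex_of_real (weight (snd (fst b)) * weight (snd (snd b)))) =
    (\<Sum>(M1, M2)\<in>T (nat n) \<times> T (nat (n + s)). complex_of_real (g a M1 * g a M2))"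
    unfolding U_def using True
    apply (simp add: sum.reindex[OF inj])
    apply (rule sum.cong[OF refl])
    apply (auto simp: V_def tensor_def YY_def E_monM hw_g[symmetric] T_iff power2_eq_square)
    done
  also have "\<dots> = complex_of_real (tt a s n)"
    using True by (simp add: tt_def AA_def sum_product sum.cartesian_product of_real_sum case_prod_beta)
  finally show ?thesis .
qed

lemma inner_V: "inner_tens (V a A s n) (V a A s n) = complex_of_real (tt a s n)"
  by (subst inner_tens_gen[OF U_finite[of A s n] V_supp[of a A s n]]) (assumption, rule U_sum)

lemma orth_V: "n \<noteq> n' \<Longrightarrow> inner_tens (V a A s n) (V a A s n') = 0"
proof -
  assume "n \<noteq> n'"
  then have e: "{b. V a A s n b \<noteq> 0 \<and> V a A s n' b \<noteq> 0} = {}"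
    using U_disj[of n n' A s] V_supp by blast
  show ?thesis unfolding inner_tens_def by (subst e) simp
qed

lemma inner_sum_V:
  assumes I: "finite I"
  shows "inner_tens (\<lambda>x. \<Sum>n\<in>I. V a A s n x) (\<lambda>x. \<Sum>n\<in>I. V a A s n x) = complex_of_real (\<Sum>n\<in>I. tt a s n)"
proof -
  let ?F = "\<lambda>x. \<Sum>n\<in>I. V a A s n x"
  let ?w = "\<lambda>b. complex_of_real (weight (snd (fst b)) * weight (snd (snd b)))"
  have S: "finite (\<Union>n\<in>I. U A s n)" using I U_finite by simp
  have supp: "?F b \<noteq> 0 \<Longrightarrow> b \<in> (\<Union>n\<in>I. U A s n)" for b
  proof -
    assume "?F b \<noteq> 0"
    then obtain n where "n \<in> I" "V a A s n b \<noteq> 0" by (meson sum.neutral)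
    then show ?thesis using V_supp by blast
  qed
  have val: "?F b = V a A s n b" if "n \<in> I" "b \<in> U A s n" for n b
  proof -
    have "?F b = V a A s n b + (\<Sum>n'\<in>I - {n}. V a A s n' b)"
      using I that(1) by (simp add: sum.remove)
    also have "(\<Sum>n'\<in>I - {n}. V a A s n' b) = 0"
    proof (rule sum.neutral, rule ballI)
      fix n' assume "n' \<in> I - {n}"
      then have "b \<notin> U A s n'" using U_disj[of n n' A s] that by auto
      then show "V a A s n' b = 0" using V_supp by blast
    qed
    finally show ?thesis by simp
  qed
  have "inner_tens ?F ?F = (\<Sum>b\<in>(\<Union>n\<in>I. U A s n). cnj (?F b) * ?F b * ?w b)"
    by (rule inner_tens_gen[OF S supp])
  also have "\<dots> = (\<Sum>n\<in>I. \<Sum>b\<in>U A s n. cnj (?F b) * ?F b * ?w b)"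
    by (rule sum.UNION_disjoint) (use I U_finite U_disj in auto)
  also have "\<dots> = (\<Sum>n\<in>I. \<Sum>b\<in>U A s n. cnj (V a A s n b) * V a A s n b * ?w b)"
    by (intro sum.cong refl) (simp add: val)
  also have "\<dots> = (\<Sum>n\<in>I. complex_of_real (tt a s n))" by (rule sum.cong[OF refl], rule U_sum)
  finally show ?thesis by (simp add: of_real_sum)
qed



lemma tt_nonneg: "0 \<le> tt a s n"
  by (simp add: tt_def AA_nonneg)

lemma tt_lower:
  assumes a: "1/2 \<le> a\<^sup>2" and n: "1 \<le> n" "1 \<le> n + s"
  shows "1 / (4 * (real_of_int n + \<bar>real_of_int s\<bar>)) \<le> tt a s n"
proof -
  let ?x = "AA a (nat n)" and ?y = "AA a (nat (n + s))"
  have t: "tt a s n = ?x * ?y" using n by (simp add: tt_def)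
  have hx: "1 \<le> 4 * real_of_int n * ?x\<^sup>2" using AA_lower[OF a, of "nat n"] n by simp
  have hy: "1 \<le> 4 * real_of_int (n + s) * ?y\<^sup>2" using AA_lower[OF a, of "nat (n + s)"] n by simp
  have "1 * 1 \<le> (4 * real_of_int n * ?x\<^sup>2) * (4 * real_of_int (n + s) * ?y\<^sup>2)"
    using hx hy by (intro mult_mono) auto
  also have "\<dots> = 16 * (real_of_int n * real_of_int (n + s)) * (?x * ?y)\<^sup>2"
    by (simp add: power2_eq_square algebra_simps)
  also have "\<dots> \<le> 16 * (real_of_int n + \<bar>real_of_int s\<bar>)\<^sup>2 * (?x * ?y)\<^sup>2"
  proof -
    have "real_of_int n * real_of_int (n + s) \<le> (real_of_int n + \<bar>real_of_int s\<bar>)\<^sup>2"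
    proof -
      have "real_of_int (n + s) \<le> real_of_int n + \<bar>real_of_int s\<bar>" by simp
      moreover have "real_of_int n \<le> real_of_int n + \<bar>real_of_int s\<bar>" by simp
      moreover have "0 \<le> real_of_int (n + s)" "0 \<le> real_of_int n" using n by simp_all
      ultimately have "real_of_int n * real_of_int (n + s) \<le> (real_of_int n + \<bar>real_of_int s\<bar>) * (real_of_int n + \<bar>real_of_int s\<bar>)"
        by (intro mult_mono) auto
      then show ?thesis by (simp add: power2_eq_square)
    qed
    then show ?thesis by (intro mult_right_mono) auto
  qed
  also have "\<dots> = (4 * (real_of_int n + \<bar>real_of_int s\<bar>) * (?x * ?y))\<^sup>2"
    by (simp only: power_mult_distrib) (simp add: power2_eq_square)
  finally have "1 \<le> (4 * (real_of_int n + \<bar>real_of_int s\<bar>) * (?x * ?y))\<^sup>2" by simp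
  then have "1 \<le> 4 * (real_of_int n + \<bar>real_of_int s\<bar>) * (?x * ?y)"
  proof -
    have X0: "0 \<le> 4 * (real_of_int n + \<bar>real_of_int s\<bar>) * (?x * ?y)"
      using AA_nonneg n by (intro mult_nonneg_nonneg) auto
    show ?thesis by (rule power2_le_imp_le[OF _ X0]) (use \<open>1 \<le> (4 * (real_of_int n + \<bar>real_of_int s\<bar>) * (?x * ?y))\<^sup>2\<close> in simp)
  qed
  moreover have "0 < 4 * (real_of_int n + \<bar>real_of_int s\<bar>)" using n by simp
  ultimately show ?thesis unfolding t by (simp add: divide_le_eq mult.commute)
qed

lemma not_summable_tt:
  assumes a: "1/2 \<le> a\<^sup>2"
  shows "\<not> summable (\<lambda>k::nat. tt a s (int k))"
proof
  assume sm: "summable (\<lambda>k::nat. tt a s (int k))"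
  define c where "c = nat \<bar>s\<bar> + 1"
  have sm2: "summable (\<lambda>k. tt a s (int (k + c)))"
    using sm summable_iff_shift[of "\<lambda>k. tt a s (int k)" c] by simp
  have le: "norm (inverse (real (k + c)) / 8) \<le> tt a s (int (k + c))" for k
  proof -
    have c1: "1 \<le> int (k + c)" "1 \<le> int (k + c) + s" by (auto simp: c_def)
    have "inverse (real (k + c)) / 8 \<le> 1 / (4 * (real (k + c) + \<bar>real_of_int s\<bar>))"
    proof -
      have "\<bar>real_of_int s\<bar> \<le> real (k + c)" by (simp add: c_def)
      then show ?thesis using c1 by (simp add: field_simps)
    qed
    also have "\<dots> \<le> tt a s (int (k + c))" using tt_lower[OF a c1] by simp
    finally show ?thesis by simp
  qed
  have "summable (\<lambda>k. inverse (real (k + c)) / 8)"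
    by (rule summable_comparison_test'[OF sm2]) (use le in auto)
  then have "summable (\<lambda>k. inverse (real (k + c)))" using summable_divide[of _ "1/8"] by simp
  then have "summable (\<lambda>k. inverse (real k) :: real)"
    using summable_iff_shift[of "\<lambda>k. inverse (real k) :: real" c] by simp
  then show False using not_summable_harmonic by blast
qed



theorem mainTheorem2:
  fixes \<alpha>0 \<alpha> :: real and s :: int
  assumes "0 < \<bar>\<alpha>0\<bar>" and "\<bar>\<alpha>0\<bar> \<le> 1"
    and "\<exists>a::int. \<alpha> = of_int a * \<alpha>0"
    and "1 / sqrt 2 \<le> \<bar>\<alpha>\<bar>" and "\<bar>\<alpha>\<bar> \<le> 1"
  shows "let d = \<alpha>\<^sup>2 / 2;
             v = (\<lambda>n::int. tensor (Ycoef \<alpha>0 \<alpha> (- of_int n - d) (vac 0))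
                                  (Ycoef \<alpha>0 \<alpha> (- of_int n - d - of_int s) (vac 0)))
         in (\<forall>n n'. n \<noteq> n' \<longrightarrow> inner_tens (v n) (v n') = 0)
            \<and> \<not> ((\<lambda>n. (tnorm (v n))\<^sup>2) summable_on (UNIV :: int set))
            \<and> \<not> (\<forall>\<epsilon>>0. \<exists>N. \<forall>M\<ge>N. \<forall>M'\<ge>N.
                    tnorm (\<lambda>x. psum v M x - psum v M' x) < \<epsilon>)"
proof -
  obtain A :: int where aA: "\<alpha> = of_int A * \<alpha>0" using assms(3) by blast
  have a0: "\<alpha>0 \<noteq> 0" using assms(1) by auto
  have a2: "1/2 \<le> \<alpha>\<^sup>2"
  proof -
    have "(1 / sqrt 2)\<^sup>2 \<le> \<bar>\<alpha>\<bar>\<^sup>2" by (rule power_mono) (use assms(4) in auto)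
    then show ?thesis by (simp add: power_divide)
  qed
  define v where "v = (\<lambda>n::int. tensor (Ycoef \<alpha>0 \<alpha> (- of_int n - \<alpha>\<^sup>2 / 2) (vac 0))
                                  (Ycoef \<alpha>0 \<alpha> (- of_int n - \<alpha>\<^sup>2 / 2 - of_int s) (vac 0)))"
  have vV: "v = V \<alpha> A s"
  proof
    fix n
    have y1: "Ycoef \<alpha>0 \<alpha> (- of_int n - \<alpha>\<^sup>2 / 2) (vac 0) = YY \<alpha> A n"
      unfolding YY_def by (rule Ycoef_vac[OF a0 aA]) simp
    have y2: "Ycoef \<alpha>0 \<alpha> (- of_int n - \<alpha>\<^sup>2 / 2 - of_int s) (vac 0) = YY \<alpha> A (n + s)"
      unfolding YY_def by (rule Ycoef_vac[OF a0 aA]) simp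
    show "v n = V \<alpha> A s n" by (simp add: v_def V_def y1 y2)
  qed
  have tn: "(tnorm (V \<alpha> A s n))\<^sup>2 = tt \<alpha> s n" for n
    by (simp add: tnorm_def inner_V tt_nonneg)
  have P1: "\<forall>n n'. n \<noteq> n' \<longrightarrow> inner_tens (v n) (v n') = 0"
    by (simp add: vV orth_V)
  have nsum: "\<not> summable (\<lambda>k::nat. tt \<alpha> s (int k))" by (rule not_summable_tt[OF a2])
  have P2: "\<not> ((\<lambda>n. (tnorm (v n))\<^sup>2) summable_on (UNIV :: int set))"
  proof
    assume "(\<lambda>n. (tnorm (v n))\<^sup>2) summable_on (UNIV :: int set)"
    then have "tt \<alpha> s summable_on (UNIV :: int set)" by (simp add: vV tn)
    then have "tt \<alpha> s summable_on (int ` UNIV)" by (rule summable_on_subset_banach) auto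
    then have "(tt \<alpha> s \<circ> int) summable_on UNIV" by (subst (asm) summable_on_reindex) auto
    then have "summable (\<lambda>k::nat. tt \<alpha> s (int k))"
      by (subst (asm) summable_on_UNIV_nonneg_real_iff) (auto simp: tt_nonneg o_def)
    then show False using nsum by blast
  qed
  have P3: "\<not> (\<forall>\<epsilon>>0. \<exists>N. \<forall>M\<ge>N. \<forall>M'\<ge>N. tnorm (\<lambda>x. psum v M x - psum v M' x) < \<epsilon>)"
  proof
    assume "\<forall>\<epsilon>>0. \<exists>N. \<forall>M\<ge>N. \<forall>M'\<ge>N. tnorm (\<lambda>x. psum v M x - psum v M' x) < \<epsilon>"
    then obtain N where N: "\<And>M M'. M \<ge> N \<Longrightarrow> M' \<ge> N \<Longrightarrow> tnorm (\<lambda>x. psum v M x - psum v M' x) < 1"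
      by (meson zero_less_one)
    let ?f = "\<lambda>k::nat. tt \<alpha> s (int k)"
    have "\<exists>M. (\<Sum>i<Suc N. ?f i) + 1 < (\<Sum>i<M. ?f i)"
    proof (rule ccontr)
      assume "\<not> ?thesis"
      then have "\<And>M. (\<Sum>i<M. ?f i) \<le> (\<Sum>i<Suc N. ?f i) + 1" by (simp add: not_less)
      then have "summable ?f" by (intro summableI_nonneg_bounded) (auto simp: tt_nonneg)
      then show False using nsum by blast
    qed
    then obtain M where M: "(\<Sum>i<Suc N. ?f i) + 1 < (\<Sum>i<M. ?f i)" by blast
    have MN: "Suc N \<le> M"
    proof (rule ccontr)
      assume "\<not> Suc N \<le> M"
      then have "(\<Sum>i<M. ?f i) \<le> (\<Sum>i<Suc N. ?f i)"
        by (intro sum_mono2) (auto simp: tt_nonneg)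
      then show False using M by simp
    qed
    have split: "(\<Sum>i<M. ?f i) = (\<Sum>i<Suc N. ?f i) + (\<Sum>i\<in>{Suc N..<M}. ?f i)"
      using MN sum.atLeastLessThan_concat[of 0 "Suc N" M ?f] by (simp only: lessThan_atLeast0)
    define I where "I = {- int M..int M} - {- int N..int N}"
    have I: "finite I" by (simp add: I_def)
    have diff: "(\<lambda>x. psum v M x - psum v N x) = (\<lambda>x. \<Sum>n\<in>I. V \<alpha> A s n x)"
    proof
      fix x
      have sub: "{- int N..int N} \<subseteq> {- int M..int M}" using MN by auto
      show "psum v M x - psum v N x = (\<Sum>n\<in>I. V \<alpha> A s n x)"
        unfolding psum_def I_def vV using sum_diff[OF _ sub, of "\<lambda>n. V \<alpha> A s n x"] by simp
    qed
    have "(\<Sum>i\<in>{Suc N..<M}. ?f i) = (\<Sum>n\<in>int ` {Suc N..<M}. tt \<alpha> s n)"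
      by (simp add: sum.reindex)
    also have "\<dots> \<le> (\<Sum>n\<in>I. tt \<alpha> s n)"
      by (rule sum_mono2[OF I]) (auto simp: I_def tt_nonneg)
    finally have big: "1 < (\<Sum>n\<in>I. tt \<alpha> s n)" using M split by linarith
    have "tnorm (\<lambda>x. psum v M x - psum v N x) = sqrt (\<Sum>n\<in>I. tt \<alpha> s n)"
      unfolding diff tnorm_def inner_sum_V[OF I] by simp
    also have "\<dots> > 1" using big by simp
    finally have "1 < tnorm (\<lambda>x. psum v M x - psum v N x)" .
    moreover have "tnorm (\<lambda>x. psum v M x - psum v N x) < 1" using N MN by simp
    ultimately show False by simp
  qed
  show ?thesis unfolding Let_def using P1 P2 P3 by (simp add: v_def)
qed

end
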